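(* Let $N\ge1$, $n=\sum_{\nu=1}^N n_\nu$, $m\ge1$. For $\nu=1,\dots,N$ let $Q_\nu\in\mathbb{R}^{n_\nu\times n_\nu}$ be symmetric positive definite, $c_\nu\in\mathbb{R}^{n_\nu}$, and $X_\nu\subseteq\mathbb{R}^{n_\nu}$ nonempty such that $X=X_1\times\dots\times X_N$ is convex and closed. Let $a\in\mathbb{R}^m$, $a\ge0$, $Q_y\in\mathbb{R}^{m\times m}$ positive definite diagonal, $B,L\in\mathbb{R}^{n\times m}$. Let $\varepsilon>0$ and let $\tilde\phi_\varepsilon:\mathbb{R}\to\mathbb{R}$ be convex and smooth (applied componentwise to vectors). Consider the Nash equilibrium problem NEP($\varepsilon$) in which player $\nu$ solves $$\min_{x_\nu\in X_\nu}\ \theta^\varepsilon_\nu(x_\nu,x_{-\nu})=\tfrac12 x_\nu^\top Q_\nu x_\nu+c_\nu^\top x_\nu+\tfrac12\sum_{i=1}^m a_i\Big[(L^\top+Q_y^{-1}B^\top)x+\tilde\phi_\varepsilon\big((L^\top-Q_y^{-1}B^\top)x\big)\Big]_i.$$ Then NEP($\varepsilon$) has a unique Nash equilibrium, i.e. a unique $x^*\in X$ with $\theta^\varepsilon_\nu(x^*_\nu,x^*_{-\nu})\le\theta^\varepsilon_\nu(x_\nu,x^*_{-\nu})$ for all $x_\nu\in X_\nu$ and all $\nu$.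
   Context: Notation: $x=(x_1,\dots,x_N)$ with $x_\nu\in\mathbb{R}^{n_\nu}$, $x_{-\nu}$ = all components other than $x_\nu$. NEP($\varepsilon$) arises from a multi-leader-follower game by replacing the follower's best response $\max\{Q_y^{-1}B^\top x,L^\top x\}$ with its smoothing $\tfrac12[(L^\top+Q_y^{-1}B^\top)x+\tilde\phi_\varepsilon((L^\top-Q_y^{-1}B^\top)x)]$, obtained from a smooth NCP function $\phi_\varepsilon(\alpha,\beta)=\alpha+\beta-\tilde\phi_\varepsilon(\alpha-\beta)$. *)

theory Defs
  imports "HOL-Analysis.Analysis"
begin

text \<open>Vectors in R^d are represented as functions nat => real vanishing at indices >= d.
  A strategy profile x = (x_1,...,x_N) is a function nat => nat => real, where x nu is the
  block of player nu (nu < N); blocks of indices nu >= N are zero.\<close>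

definition vecs :: "nat \<Rightarrow> (nat \<Rightarrow> real) set" where
  "vecs d = {v. \<forall>j\<ge>d. v j = 0}"

definition profiles :: "nat \<Rightarrow> (nat \<Rightarrow> nat) \<Rightarrow> (nat \<Rightarrow> nat \<Rightarrow> real) set" where
  "profiles N d = {x. (\<forall>\<nu><N. x \<nu> \<in> vecs (d \<nu>)) \<and> (\<forall>\<nu>\<ge>N. x \<nu> = (\<lambda>_. 0))}"

definition prodX :: "nat \<Rightarrow> (nat \<Rightarrow> nat) \<Rightarrow> (nat \<Rightarrow> (nat \<Rightarrow> real) set) \<Rightarrow> (nat \<Rightarrow> nat \<Rightarrow> real) set" where
  "prodX N d Xs = {x \<in> profiles N d. \<forall>\<nu><N. x \<nu> \<in> Xs \<nu>}"

definition convex_profile_set :: "(nat \<Rightarrow> nat \<Rightarrow> real) set \<Rightarrow> bool" where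
  "convex_profile_set S \<longleftrightarrow>
     (\<forall>x\<in>S. \<forall>y\<in>S. \<forall>t::real. 0 \<le> t \<and> t \<le> 1 \<longrightarrow> (\<lambda>\<nu> j. (1 - t) * x \<nu> j + t * y \<nu> j) \<in> S)"

definition sym_pd :: "nat \<Rightarrow> (nat \<Rightarrow> nat \<Rightarrow> real) \<Rightarrow> bool" where
  "sym_pd d Q \<longleftrightarrow> (\<forall>j<d. \<forall>k<d. Q j k = Q k j) \<and>
     (\<forall>v\<in>vecs d. v \<noteq> (\<lambda>_. 0) \<longrightarrow> (\<Sum>j<d. \<Sum>k<d. v j * Q j k * v k) > 0)"

text \<open>(M^T x)_i for an n x m matrix M whose rows are indexed by pairs (nu, j), j < d nu.\<close>
definition matT_apply :: "nat \<Rightarrow> (nat \<Rightarrow> nat) \<Rightarrow> (nat \<Rightarrow> nat \<Rightarrow> nat \<Rightarrow> real) \<Rightarrow> (nat \<Rightarrow> nat \<Rightarrow> real) \<Rightarrow> nat \<Rightarrow> real" where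
  "matT_apply N d M x i = (\<Sum>\<nu><N. \<Sum>j<d \<nu>. M \<nu> j i * x \<nu> j)"

text \<open>Cost of player nu in NEP(eps); qy i are the (positive) diagonal entries of Q_y,
  so (Q_y^{-1} B^T x)_i = (B^T x)_i / qy i.\<close>
definition theta :: "nat \<Rightarrow> (nat \<Rightarrow> nat) \<Rightarrow> nat \<Rightarrow> (nat \<Rightarrow> nat \<Rightarrow> nat \<Rightarrow> real) \<Rightarrow> (nat \<Rightarrow> nat \<Rightarrow> real)
   \<Rightarrow> (nat \<Rightarrow> real) \<Rightarrow> (nat \<Rightarrow> real) \<Rightarrow> (nat \<Rightarrow> nat \<Rightarrow> nat \<Rightarrow> real) \<Rightarrow> (nat \<Rightarrow> nat \<Rightarrow> nat \<Rightarrow> real)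
   \<Rightarrow> (real \<Rightarrow> real) \<Rightarrow> nat \<Rightarrow> (nat \<Rightarrow> nat \<Rightarrow> real) \<Rightarrow> real" where
  "theta N d m Q c a qy B L phi \<nu> x =
     (1/2) * (\<Sum>j<d \<nu>. \<Sum>k<d \<nu>. x \<nu> j * Q \<nu> j k * x \<nu> k)
     + (\<Sum>j<d \<nu>. c \<nu> j * x \<nu> j)
     + (1/2) * (\<Sum>i<m. a i *
          (matT_apply N d L x i + matT_apply N d B x i / qy i
           + phi (matT_apply N d L x i - matT_apply N d B x i / qy i)))"

definition is_nash_eq :: "nat \<Rightarrow> (nat \<Rightarrow> nat) \<Rightarrow> (nat \<Rightarrow> (nat \<Rightarrow> real) set)
   \<Rightarrow> (nat \<Rightarrow> (nat \<Rightarrow> nat \<Rightarrow> real) \<Rightarrow> real) \<Rightarrow> (nat \<Rightarrow> nat \<Rightarrow> real) \<Rightarrow> bool" where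
  "is_nash_eq N d Xs \<theta> x \<longleftrightarrow> x \<in> prodX N d Xs \<and>
     (\<forall>\<nu><N. \<forall>y\<in>Xs \<nu>. \<theta> \<nu> x \<le> \<theta> \<nu> (x(\<nu> := y)))"

end

theory Submission
  imports Defs
begin

lemma compact_PiE_UNIV:
  assumes "\<And>i. compact (S i :: 'b::topological_space set)"
  shows "compact (PiE UNIV S)"
proof -
  have "compactin (product_topology (\<lambda>i. euclidean) UNIV) (PiE UNIV S)"
    using assms by (simp add: compactin_PiE)
  then show ?thesis by (simp add: euclidean_product_topology)
qed

lemma phi_deriv:
  assumes "phi C1_differentiable_on UNIV"
  shows "(phi has_real_derivative deriv phi s) (at s)"
  using assms unfolding C1_differentiable_on_eq
  by (simp add: DERIV_deriv_iff_real_differentiable)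

lemma phi_tangent:
  assumes "convex_on UNIV phi" "phi C1_differentiable_on UNIV"
  shows "phi b - phi a \<ge> deriv phi a * (b - a)"
  using convex_on_imp_above_tangent[OF assms(1), of a b "deriv phi a"] phi_deriv[OF assms(2), of a]
  by simp

lemma continuous_coord2: "continuous_on UNIV (\<lambda>x::nat\<Rightarrow>nat\<Rightarrow>real. x n j)"
  using continuous_on_compose2[OF continuous_on_product_coordinates[of j] continuous_on_product_coordinates[of n]]
  by auto


locale nepctx =
  fixes N m :: nat and d :: "nat \<Rightarrow> nat"
    and Q :: "nat \<Rightarrow> nat \<Rightarrow> nat \<Rightarrow> real" and c :: "nat \<Rightarrow> nat \<Rightarrow> real"
    and Xs :: "nat \<Rightarrow> (nat \<Rightarrow> real) set"
    and a qy :: "nat \<Rightarrow> real" and B L :: "nat \<Rightarrow> nat \<Rightarrow> nat \<Rightarrow> real"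
    and phi :: "real \<Rightarrow> real"
  assumes pd: "\<forall>\<nu><N. sym_pd (d \<nu>) (Q \<nu>)"
    and XX: "\<forall>\<nu><N. Xs \<nu> \<noteq> {} \<and> Xs \<nu> \<subseteq> vecs (d \<nu>)"
    and cvx: "convex_profile_set (prodX N d Xs)" and clo: "closed (prodX N d Xs)"
    and apos: "\<forall>i<m. a i \<ge> 0"
    and qpos: "\<forall>i<m. qy i > 0"
    and phic: "convex_on UNIV phi" and phid: "phi C1_differentiable_on UNIV"
begin

definition "q2 \<nu> v = (\<Sum>j<d \<nu>. \<Sum>k<d \<nu>. v j * Q \<nu> j k * v k)"
definition "qv \<nu> v = (1/2) * q2 \<nu> v + (\<Sum>j<d \<nu>. c \<nu> j * v j)"
definition "LB x i = matT_apply N d L x i + matT_apply N d B x i / qy i"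
definition "kk x i = matT_apply N d L x i - matT_apply N d B x i / qy i"
definition "FF x = (1/2) * (\<Sum>i<m. a i * (LB x i + phi (kk x i)))"
definition "PP x = (\<Sum>\<nu><N. qv \<nu> (x \<nu>)) + FF x"
definition "G x \<nu> j = (1/2) * (\<Sum>i<m. a i * (L \<nu> j i + B \<nu> j i / qy i
     + deriv phi (kk x i) * (L \<nu> j i - B \<nu> j i / qy i)))"
definition "blk x \<nu> h = (1/2) * (\<Sum>j<d \<nu>. \<Sum>k<d \<nu>. h j * Q \<nu> j k * x \<nu> k + x \<nu> j * Q \<nu> j k * h k)
    + (\<Sum>j<d \<nu>. c \<nu> j * h j) + (\<Sum>j<d \<nu>. G x \<nu> j * h j)"

lemma theta_eq: "theta N d m Q c a qy B L phi \<nu> x = qv \<nu> (x \<nu>) + FF x"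
  unfolding theta_def qv_def q2_def FF_def LB_def kk_def by (simp add: algebra_simps)

lemma matT_lin: "matT_apply N d M (\<lambda>\<mu> j. x \<mu> j + t * H \<mu> j) i
   = matT_apply N d M x i + t * matT_apply N d M H i"
  by (simp add: matT_apply_def sum.distrib sum_distrib_left algebra_simps)

lemma LB_lin: "LB (\<lambda>\<mu> j. x \<mu> j + t * H \<mu> j) i = LB x i + t * LB H i"
  by (simp add: LB_def matT_lin algebra_simps add_divide_distrib)
lemma kk_lin: "kk (\<lambda>\<mu> j. x \<mu> j + t * H \<mu> j) i = kk x i + t * kk H i"
  by (simp add: kk_def matT_lin algebra_simps diff_divide_distrib add_divide_distrib)

lemma DF_eq: "(1/2) * (\<Sum>i<m. a i * (LB H i + deriv phi (kk x i) * kk H i))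
   = (\<Sum>\<nu><N. \<Sum>j<d \<nu>. G x \<nu> j * H \<nu> j)"
proof -
  have per: "a i * (LB H i + p * kk H i) = (\<Sum>\<nu><N. \<Sum>j<d \<nu>. a i * (L \<nu> j i + B \<nu> j i / qy i
     + p * (L \<nu> j i - B \<nu> j i / qy i)) * H \<nu> j)" for i p
    by (simp add: LB_def kk_def matT_apply_def sum_divide_distrib sum_distrib_left
        sum.distrib[symmetric] sum_subtractf[symmetric] algebra_simps)
  have "(1/2) * (\<Sum>i<m. a i * (LB H i + deriv phi (kk x i) * kk H i))
     = (1/2) * (\<Sum>i<m. \<Sum>\<nu><N. \<Sum>j<d \<nu>. a i * (L \<nu> j i + B \<nu> j i / qy i
     + deriv phi (kk x i) * (L \<nu> j i - B \<nu> j i / qy i)) * H \<nu> j)"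
    by (simp add: per)
  also have "\<dots> = (1/2) * (\<Sum>\<nu><N. \<Sum>j<d \<nu>. \<Sum>i<m. a i * (L \<nu> j i + B \<nu> j i / qy i
     + deriv phi (kk x i) * (L \<nu> j i - B \<nu> j i / qy i)) * H \<nu> j)"
    by (subst sum.swap, subst (2) sum.swap, rule refl)
  also have "\<dots> = (\<Sum>\<nu><N. \<Sum>j<d \<nu>. G x \<nu> j * H \<nu> j)"
    by (simp add: G_def sum_distrib_left sum_distrib_right mult.assoc)
  finally show ?thesis .
qed

lemma phi_line: "((\<lambda>t. phi (\<alpha> + t * \<beta>)) has_real_derivative deriv phi \<alpha> * \<beta>) (at 0)"
proof -
  have g: "((\<lambda>t. \<alpha> + t * \<beta>) has_real_derivative \<beta>) (at 0)"
    by (auto intro!: derivative_eq_intros)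
  have f: "(phi has_real_derivative deriv phi \<alpha>) (at ((\<lambda>t. \<alpha> + t * \<beta>) 0))"
    using phi_deriv[OF phid, of \<alpha>] by simp
  show ?thesis using DERIV_chain2[OF f g] by simp
qed

lemma q2_line: "((\<lambda>t. q2 \<nu> (\<lambda>j. v j + t * h j)) has_real_derivative
   (\<Sum>j<d \<nu>. \<Sum>k<d \<nu>. h j * Q \<nu> j k * v k + v j * Q \<nu> j k * h k)) (at 0)"
  unfolding q2_def
  by (auto intro!: derivative_eq_intros sum.cong simp: algebra_simps)

lemma lin_line: "((\<lambda>t. (\<Sum>j<d \<nu>. c \<nu> j * (v j + t * h j))) has_real_derivative
   (\<Sum>j<d \<nu>. c \<nu> j * h j)) (at 0)"
  by (auto intro!: derivative_eq_intros sum.cong simp: algebra_simps)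

lemma FF_line: "((\<lambda>t. FF (\<lambda>\<mu> j. x \<mu> j + t * H \<mu> j)) has_real_derivative
   (1/2) * (\<Sum>i<m. a i * (LB H i + deriv phi (kk x i) * kk H i))) (at 0)"
proof -
  have "((\<lambda>t. (1/2) * (\<Sum>i<m. a i * ((LB x i + t * LB H i) + phi (kk x i + t * kk H i))))
      has_real_derivative (1/2) * (\<Sum>i<m. a i * (LB H i + deriv phi (kk x i) * kk H i))) (at 0)"
    by (auto intro!: derivative_eq_intros phi_line sum.cong simp: mult.commute)
  then show ?thesis by (simp add: FF_def LB_lin kk_lin)
qed

lemma theta_line:
  assumes "\<And>\<mu> j. \<mu> \<noteq> \<nu> \<Longrightarrow> H \<mu> j = 0" and nuN: "\<nu> < N"
  shows "((\<lambda>t. theta N d m Q c a qy B L phi \<nu> (\<lambda>\<mu> j. x \<mu> j + t * H \<mu> j)) has_real_derivative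
     blk x \<nu> (H \<nu>)) (at 0)"
proof -
  have e: "(1/2) * (\<Sum>i<m. a i * (LB H i + deriv phi (kk x i) * kk H i)) = (\<Sum>j<d \<nu>. G x \<nu> j * H \<nu> j)"
  proof -
    have "(\<Sum>\<mu><N. \<Sum>j<d \<mu>. G x \<mu> j * H \<mu> j) = (\<Sum>\<mu><N. if \<mu> = \<nu> then (\<Sum>j<d \<nu>. G x \<nu> j * H \<nu> j) else 0)"
      by (rule sum.cong) (auto simp: assms)
    also have "\<dots> = (\<Sum>j<d \<nu>. G x \<nu> j * H \<nu> j)" using nuN by simp
    finally show ?thesis using DF_eq[of H x] by linarith
  qed
  have "((\<lambda>t. (1/2) * q2 \<nu> (\<lambda>j. x \<nu> j + t * H \<nu> j) + (\<Sum>j<d \<nu>. c \<nu> j * (x \<nu> j + t * H \<nu> j))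
       + FF (\<lambda>\<mu> j. x \<mu> j + t * H \<mu> j)) has_real_derivative
     (1/2) * (\<Sum>j<d \<nu>. \<Sum>k<d \<nu>. H \<nu> j * Q \<nu> j k * x \<nu> k + x \<nu> j * Q \<nu> j k * H \<nu> k)
     + (\<Sum>j<d \<nu>. c \<nu> j * H \<nu> j) + (1/2) * (\<Sum>i<m. a i * (LB H i + deriv phi (kk x i) * kk H i))) (at 0)"
    by (intro DERIV_add DERIV_cmult q2_line lin_line FF_line)
  then show ?thesis by (simp only: theta_eq qv_def blk_def e)
qed

lemma foc:
  assumes ne: "is_nash_eq N d Xs (theta N d m Q c a qy B L phi) x" and nu: "\<nu> < N" and w: "w \<in> Xs \<nu>"
  shows "blk x \<nu> (\<lambda>j. w j - x \<nu> j) \<ge> 0"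
proof (rule ccontr)
  assume "\<not> ?thesis"
  hence neg: "blk x \<nu> (\<lambda>j. w j - x \<nu> j) < 0" by simp
  define H where "H = (\<lambda>\<mu> j. if \<mu> = \<nu> then w j - x \<nu> j else 0)"
  have der: "((\<lambda>t. theta N d m Q c a qy B L phi \<nu> (\<lambda>\<mu> j. x \<mu> j + t * H \<mu> j)) has_real_derivative
     blk x \<nu> (\<lambda>j. w j - x \<nu> j)) (at 0)"
    using theta_line[of \<nu> H x, OF _ nu] by (simp add: H_def)
  obtain \<delta> where dpos: "\<delta> > 0" and dec: "\<forall>h>0. h < \<delta> \<longrightarrow>
      theta N d m Q c a qy B L phi \<nu> (\<lambda>\<mu> j. x \<mu> j + 0 * H \<mu> j) >
      theta N d m Q c a qy B L phi \<nu> (\<lambda>\<mu> j. x \<mu> j + (0 + h) * H \<mu> j)"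
    using DERIV_neg_dec_right[OF der neg] by blast
  define t where "t = min (\<delta>/2) 1"
  have t: "0 < t" "t < \<delta>" "t \<le> 1" using dpos by (auto simp: t_def)
  have xX: "x \<in> prodX N d Xs" using ne by (simp add: is_nash_eq_def)
  have wv: "w \<in> vecs (d \<nu>)" using XX nu w by blast
  have xw: "x(\<nu> := w) \<in> prodX N d Xs"
    using xX wv w nu unfolding prodX_def profiles_def by auto
  have comb: "(\<lambda>\<mu> j. (1 - t) * x \<mu> j + t * (x(\<nu> := w)) \<mu> j) \<in> prodX N d Xs"
    using cvx[unfolded convex_profile_set_def, rule_format, OF xX xw, of t] t by simp
  define y where "y = (\<lambda>j. x \<nu> j + t * (w j - x \<nu> j))"
  have eq: "(\<lambda>\<mu> j. (1 - t) * x \<mu> j + t * (x(\<nu> := w)) \<mu> j) = x(\<nu> := y)"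
    by (auto simp: fun_eq_iff y_def algebra_simps)
  have eq2: "(\<lambda>\<mu> j. x \<mu> j + t * H \<mu> j) = x(\<nu> := y)"
    by (auto simp: fun_eq_iff H_def y_def)
  have "y \<in> Xs \<nu>" using comb nu unfolding eq prodX_def by auto
  then have le: "theta N d m Q c a qy B L phi \<nu> x \<le> theta N d m Q c a qy B L phi \<nu> (x(\<nu> := y))"
    using ne nu by (simp add: is_nash_eq_def)
  have "theta N d m Q c a qy B L phi \<nu> x > theta N d m Q c a qy B L phi \<nu> (x(\<nu> := y))"
    using dec t by (simp add: eq2[symmetric])
  with le show False by simp
qed

lemma ti:
  "PP z - PP x \<ge> (\<Sum>\<nu><N. blk x \<nu> (\<lambda>j. z \<nu> j - x \<nu> j)) + (1/2) * (\<Sum>\<nu><N. q2 \<nu> (\<lambda>j. z \<nu> j - x \<nu> j))"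
proof -
  define H where "H = (\<lambda>\<mu> j. z \<mu> j - x \<mu> j)"
  have zH: "z = (\<lambda>\<mu> j. x \<mu> j + 1 * H \<mu> j)" by (simp add: H_def)
  define D where "D \<nu> = (\<Sum>j<d \<nu>. \<Sum>k<d \<nu>. H \<nu> j * Q \<nu> j k * x \<nu> k + x \<nu> j * Q \<nu> j k * H \<nu> k)" for \<nu>
  have quad: "qv \<nu> (z \<nu>) - qv \<nu> (x \<nu>) = (1/2) * D \<nu> + (\<Sum>j<d \<nu>. c \<nu> j * H \<nu> j) + (1/2) * q2 \<nu> (H \<nu>)" for \<nu>
  proof -
    have tt: "\<And>j k. z \<nu> j * Q \<nu> j k * z \<nu> k = x \<nu> j * Q \<nu> j k * x \<nu> k
       + (H \<nu> j * Q \<nu> j k * x \<nu> k + x \<nu> j * Q \<nu> j k * H \<nu> k) + H \<nu> j * Q \<nu> j k * H \<nu> k"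
      by (simp add: H_def algebra_simps)
    have "q2 \<nu> (z \<nu>) = q2 \<nu> (x \<nu>) + D \<nu> + q2 \<nu> (H \<nu>)"
      unfolding q2_def D_def tt by (simp add: sum.distrib)
    moreover have "(\<Sum>j<d \<nu>. c \<nu> j * H \<nu> j) = (\<Sum>j<d \<nu>. c \<nu> j * z \<nu> j) - (\<Sum>j<d \<nu>. c \<nu> j * x \<nu> j)"
      by (simp add: H_def right_diff_distrib sum_subtractf)
    ultimately show ?thesis by (simp add: qv_def algebra_simps)
  qed
  have ff: "FF z - FF x \<ge> (1/2) * (\<Sum>i<m. a i * (LB H i + deriv phi (kk x i) * kk H i))"
  proof -
    have fz: "FF z = (1/2) * (\<Sum>i<m. a i * (LB x i + LB H i + phi (kk x i + kk H i)))"
      using LB_lin[of x 1 H] kk_lin[of x 1 H] by (subst zH) (simp add: FF_def)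
    have sm: "(\<Sum>i<m. a i * (LB H i + deriv phi (kk x i) * kk H i))
       \<le> (\<Sum>i<m. a i * (LB x i + LB H i + phi (kk x i + kk H i)) - a i * (LB x i + phi (kk x i)))"
    proof (rule sum_mono)
      fix i assume "i \<in> {..<m}"
      then have ai: "a i \<ge> 0" using apos by auto
      have "deriv phi (kk x i) * kk H i \<le> phi (kk x i + kk H i) - phi (kk x i)"
        using phi_tangent[OF phic phid, of "kk x i" "kk x i + kk H i"] by simp
      then have "a i * (LB H i + deriv phi (kk x i) * kk H i) \<le> a i * (LB H i + (phi (kk x i + kk H i) - phi (kk x i)))"
        using ai by (intro mult_left_mono) auto
      then show "a i * (LB H i + deriv phi (kk x i) * kk H i)
         \<le> a i * (LB x i + LB H i + phi (kk x i + kk H i)) - a i * (LB x i + phi (kk x i))"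
        by (simp add: algebra_simps)
    qed
    have "(\<Sum>i<m. a i * (LB x i + LB H i + phi (kk x i + kk H i)) - a i * (LB x i + phi (kk x i)))
      = (\<Sum>i<m. a i * (LB x i + LB H i + phi (kk x i + kk H i))) - (\<Sum>i<m. a i * (LB x i + phi (kk x i)))"
      by (rule sum_subtractf)
    then show ?thesis using fz sm unfolding FF_def[of x] by linarith
  qed
  have "PP z - PP x = (\<Sum>\<nu><N. qv \<nu> (z \<nu>) - qv \<nu> (x \<nu>)) + (FF z - FF x)"
    by (simp add: PP_def sum_subtractf)
  also have "\<dots> \<ge> (\<Sum>\<nu><N. (1/2) * D \<nu> + (\<Sum>j<d \<nu>. c \<nu> j * H \<nu> j) + (1/2) * q2 \<nu> (H \<nu>))
      + (\<Sum>\<nu><N. \<Sum>j<d \<nu>. G x \<nu> j * H \<nu> j)"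
  proof -
    have s1: "(\<Sum>\<nu><N. qv \<nu> (z \<nu>) - qv \<nu> (x \<nu>)) = (\<Sum>\<nu><N. (1/2) * D \<nu> + (\<Sum>j<d \<nu>. c \<nu> j * H \<nu> j) + (1/2) * q2 \<nu> (H \<nu>))"
      by (simp only: quad)
    show ?thesis using s1 ff DF_eq[of H x] by linarith
  qed
  finally have fin: "PP z - PP x \<ge> (\<Sum>\<nu><N. (1/2) * D \<nu> + (\<Sum>j<d \<nu>. c \<nu> j * H \<nu> j) + (1/2) * q2 \<nu> (H \<nu>))
      + (\<Sum>\<nu><N. \<Sum>j<d \<nu>. G x \<nu> j * H \<nu> j)" .
  have b: "(\<Sum>\<nu><N. blk x \<nu> (\<lambda>j. z \<nu> j - x \<nu> j)) = (\<Sum>\<nu><N. (1/2) * D \<nu> + (\<Sum>j<d \<nu>. c \<nu> j * H \<nu> j))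
      + (\<Sum>\<nu><N. \<Sum>j<d \<nu>. G x \<nu> j * H \<nu> j)"
    by (simp add: blk_def D_def H_def sum.distrib)
  have q: "(\<Sum>\<nu><N. (1/2) * D \<nu> + (\<Sum>j<d \<nu>. c \<nu> j * H \<nu> j) + (1/2) * q2 \<nu> (H \<nu>))
     = (\<Sum>\<nu><N. (1/2) * D \<nu> + (\<Sum>j<d \<nu>. c \<nu> j * H \<nu> j)) + (1/2) * (\<Sum>\<nu><N. q2 \<nu> (\<lambda>j. z \<nu> j - x \<nu> j))"
    by (simp only: sum.distrib sum_distrib_left H_def)
  show ?thesis using fin b q by linarith
qed

lemma q2_pos: assumes "\<nu> < N" "h \<in> vecs (d \<nu>)" "h \<noteq> (\<lambda>_. 0)" shows "q2 \<nu> h > 0"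
  using pd assms unfolding sym_pd_def q2_def by blast

lemma q2_nonneg: assumes "\<nu> < N" "h \<in> vecs (d \<nu>)" shows "q2 \<nu> h \<ge> 0"
proof (cases "h = (\<lambda>_. 0)")
  case True then show ?thesis by (simp add: q2_def)
next
  case False then show ?thesis using q2_pos[OF assms] by fastforce
qed

lemma diff_vecs: "u \<in> vecs n \<Longrightarrow> v \<in> vecs n \<Longrightarrow> (\<lambda>j. u j - v j) \<in> vecs n"
  by (simp add: vecs_def)

lemma q2_sym: "q2 \<nu> (\<lambda>j. x j - z j) = q2 \<nu> (\<lambda>j. z j - x j)"
proof -
  have "\<And>j k. (x j - z j) * Q \<nu> j k * (x k - z k) = (z j - x j) * Q \<nu> j k * (z k - x k)"
    by (simp add: algebra_simps)
  then show ?thesis by (simp only: q2_def)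
qed

lemma uniq:
  assumes nx: "is_nash_eq N d Xs (theta N d m Q c a qy B L phi) x"
    and nz: "is_nash_eq N d Xs (theta N d m Q c a qy B L phi) z"
  shows "x = z"
proof -
  have xX: "x \<in> prodX N d Xs" and zX: "z \<in> prodX N d Xs" using nx nz by (auto simp: is_nash_eq_def)
  have b1: "(\<Sum>\<nu><N. blk x \<nu> (\<lambda>j. z \<nu> j - x \<nu> j)) \<ge> 0"
    by (rule sum_nonneg, rule foc[OF nx]) (use zX in \<open>auto simp: prodX_def\<close>)
  have b2: "(\<Sum>\<nu><N. blk z \<nu> (\<lambda>j. x \<nu> j - z \<nu> j)) \<ge> 0"
    by (rule sum_nonneg, rule foc[OF nz]) (use xX in \<open>auto simp: prodX_def\<close>)
  have vv: "\<nu> < N \<Longrightarrow> (\<lambda>j. z \<nu> j - x \<nu> j) \<in> vecs (d \<nu>)" for \<nu>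
    using xX zX by (intro diff_vecs) (auto simp: prodX_def profiles_def)
  have nn: "\<forall>\<nu>\<in>{..<N}. q2 \<nu> (\<lambda>j. z \<nu> j - x \<nu> j) \<ge> 0" using q2_nonneg vv by auto
  have sym: "(\<Sum>\<nu><N. q2 \<nu> (\<lambda>j. x \<nu> j - z \<nu> j)) = (\<Sum>\<nu><N. q2 \<nu> (\<lambda>j. z \<nu> j - x \<nu> j))"
    by (rule sum.cong[OF refl], rule q2_sym)
  have "(\<Sum>\<nu><N. q2 \<nu> (\<lambda>j. z \<nu> j - x \<nu> j)) \<le> 0"
    using ti[of z x] ti[of x z] b1 b2 sym by linarith
  moreover have "(\<Sum>\<nu><N. q2 \<nu> (\<lambda>j. z \<nu> j - x \<nu> j)) \<ge> 0" using nn by (intro sum_nonneg) auto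
  ultimately have "(\<Sum>\<nu><N. q2 \<nu> (\<lambda>j. z \<nu> j - x \<nu> j)) = 0" by linarith
  then have z0: "\<forall>\<nu>\<in>{..<N}. q2 \<nu> (\<lambda>j. z \<nu> j - x \<nu> j) = 0"
    using sum_nonneg_eq_0_iff[of "{..<N}" "\<lambda>\<nu>. q2 \<nu> (\<lambda>j. z \<nu> j - x \<nu> j)"] nn by simp
  have "z \<nu> = x \<nu>" for \<nu>
  proof (cases "\<nu> < N")
    case True
    then have "(\<lambda>j. z \<nu> j - x \<nu> j) = (\<lambda>_. 0)" using z0 q2_pos[OF True vv[OF True]] by force
    then show ?thesis by (simp add: fun_eq_iff)
  next
    case False
    then show ?thesis using xX zX by (simp add: prodX_def profiles_def)
  qed
  then show ?thesis by (simp add: fun_eq_iff)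
qed

definition "nrm2 (x::nat\<Rightarrow>nat\<Rightarrow>real) = (\<Sum>\<nu><N. \<Sum>j<d \<nu>. (x \<nu> j)^2)"
definition "Qs x = (\<Sum>\<nu><N. q2 \<nu> (x \<nu>))"
definition "KK R \<nu> j = (if \<nu> < N \<and> j < d \<nu> then {-R..R} else {0::real})"
definition "bx R = {x. \<forall>\<nu> j. x \<nu> j \<in> KK R \<nu> j}"

lemma bx_compact: "compact (bx R)"
proof -
  have "bx R = PiE UNIV (\<lambda>\<nu>. PiE UNIV (KK R \<nu>))"
    by (auto simp: bx_def PiE_UNIV_domain)
  moreover have "compact (PiE UNIV (KK R \<nu>))" for \<nu>
    by (rule compact_PiE_UNIV) (simp add: KK_def)
  ultimately show ?thesis by (simp add: compact_PiE_UNIV)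
qed

lemma bx_profiles: "bx R \<subseteq> profiles N d"
  by (auto simp: bx_def KK_def profiles_def vecs_def)

lemma profiles_bx:
  assumes p: "x \<in> profiles N d" and b: "\<And>\<nu> j. \<nu> < N \<Longrightarrow> j < d \<nu> \<Longrightarrow> \<bar>x \<nu> j\<bar> \<le> R"
  shows "x \<in> bx R"
  unfolding bx_def
proof (intro CollectI allI)
  fix \<nu> j
  show "x \<nu> j \<in> KK R \<nu> j"
  proof (cases "\<nu> < N \<and> j < d \<nu>")
    case True then show ?thesis using b[of \<nu> j] by (auto simp: KK_def abs_le_iff)
  next
    case False
    then have "x \<nu> j = 0" using p unfolding profiles_def vecs_def by (cases "\<nu> < N") auto
    then show ?thesis using False unfolding KK_def by auto
  qed
qed

lemma coord_le: "\<nu> < N \<Longrightarrow> j < d \<nu> \<Longrightarrow> (x \<nu> j)^2 \<le> nrm2 x"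
proof -
  assume a: "\<nu> < N" "j < d \<nu>"
  have "(x \<nu> j)^2 \<le> (\<Sum>j<d \<nu>. (x \<nu> j)^2)"
    using a by (intro member_le_sum) auto
  also have "\<dots> \<le> nrm2 x" unfolding nrm2_def
    using a by (intro member_le_sum[of \<nu> "{..<N}" "\<lambda>\<nu>. \<Sum>j<d \<nu>. (x \<nu> j)^2"]) (auto intro: sum_nonneg)
  finally show ?thesis .
qed

lemma nrm2_nonneg: "nrm2 x \<ge> 0" unfolding nrm2_def by (intro sum_nonneg) auto

lemma cont_nrm2: "continuous_on UNIV nrm2"
  unfolding nrm2_def by (intro continuous_intros continuous_coord2)

lemma cont_Qs: "continuous_on UNIV Qs"
  unfolding Qs_def q2_def by (intro continuous_intros continuous_coord2)

lemma phi_cont: "continuous_on UNIV phi"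
  using phid C1_differentiable_imp_continuous_on by blast

lemma cont_PP: "continuous_on UNIV PP"
proof -
  have pc: "continuous_on UNIV f \<Longrightarrow> continuous_on UNIV (\<lambda>x. phi (f x))" for f :: "(nat \<Rightarrow> nat \<Rightarrow> real) \<Rightarrow> real"
    by (rule continuous_on_compose2[OF phi_cont]) auto
  show ?thesis
    unfolding PP_def qv_def q2_def FF_def LB_def kk_def matT_apply_def
    by (intro continuous_intros continuous_coord2 pc) (use qpos in auto)
qed

lemma Qs_nn: "x \<in> profiles N d \<Longrightarrow> Qs x \<ge> 0"
  unfolding Qs_def by (intro sum_nonneg q2_nonneg) (auto simp: profiles_def)

lemma lam_exists: "\<exists>lam>0. \<forall>x\<in>profiles N d. Qs x \<ge> lam * nrm2 x"
proof -
  define S where "S = bx 1 \<inter> {x. nrm2 x = 1}"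
  have cS: "compact S" unfolding S_def
    by (intro compact_Int_closed bx_compact closed_Collect_eq cont_nrm2 continuous_on_const)
  have pos: "Qs y > 0" if yS: "y \<in> S" for y
  proof -
    have yp: "y \<in> profiles N d" and n1: "nrm2 y = 1" using yS bx_profiles by (auto simp: S_def)
    obtain \<nu> where nu: "\<nu> < N" and ynz: "y \<nu> \<noteq> (\<lambda>_. 0)"
    proof (rule ccontr)
      assume "\<not> thesis"
      then have "\<forall>\<nu><N. y \<nu> = (\<lambda>_. 0)" using that by blast
      then have "nrm2 y = 0" unfolding nrm2_def by simp
      with n1 show False by simp
    qed
    have yv: "\<And>\<mu>. \<mu> < N \<Longrightarrow> y \<mu> \<in> vecs (d \<mu>)" using yp by (auto simp: profiles_def)
    show ?thesis unfolding Qs_def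
      by (rule sum_pos2[of "{..<N}" \<nu>]) (use nu ynz yv q2_pos q2_nonneg in auto)
  qed
  obtain lam where lpos: "lam > 0" and lb: "\<forall>y\<in>S. lam \<le> Qs y"
  proof (cases "S = {}")
    case True then show ?thesis using that[of 1] by auto
  next
    case False
    from continuous_attains_inf[OF cS False continuous_on_subset[OF cont_Qs]]
    obtain y0 where "y0 \<in> S" "\<forall>y\<in>S. Qs y0 \<le> Qs y" by auto
    then show ?thesis using that[of "Qs y0"] pos by auto
  qed
  show ?thesis
  proof (intro exI conjI ballI)
    show "lam > 0" by (rule lpos)
    fix x assume xp: "x \<in> profiles N d"
    show "Qs x \<ge> lam * nrm2 x"
    proof (cases "nrm2 x = 0")
      case True then show ?thesis using Qs_nn xp by simp
    next
      case False
      define r where "r = nrm2 x"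
      have rpos: "r > 0" using False nrm2_nonneg[of x] by (simp add: r_def)
      define s where "s = sqrt r"
      have spos: "s > 0" and s2: "s^2 = r" using rpos by (auto simp: s_def)
      define y where "y = (\<lambda>\<nu> j. x \<nu> j / s)"
      have "nrm2 y = (\<Sum>\<nu><N. \<Sum>j<d \<nu>. (x \<nu> j)^2 / r)"
        by (simp add: nrm2_def y_def power_divide s2)
      also have "\<dots> = nrm2 x / r" by (simp add: nrm2_def sum_divide_distrib)
      finally have ny1: "nrm2 y = 1" using rpos by (simp add: r_def)
      have yp: "y \<in> profiles N d" using xp by (auto simp: profiles_def vecs_def y_def)
      have "y \<in> bx 1"
      proof (rule profiles_bx[OF yp])
        fix \<nu> j assume "\<nu> < N" "j < d \<nu>"
        then have "(y \<nu> j)^2 \<le> 1" using coord_le[of \<nu> j y] ny1 by simp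
        then show "\<bar>y \<nu> j\<bar> \<le> 1" by (simp add: abs_square_le_1)
      qed
      then have yS: "y \<in> S" using ny1 by (simp add: S_def)
      have tm: "\<And>\<nu> j k. y \<nu> j * Q \<nu> j k * y \<nu> k = x \<nu> j * Q \<nu> j k * x \<nu> k / r"
        by (simp add: y_def s2[symmetric] power2_eq_square)
      have qyx: "Qs y = Qs x / r"
        unfolding Qs_def q2_def tm by (simp add: sum_divide_distrib)
      have "lam \<le> Qs y" using lb yS by blast
      then have "lam \<le> Qs x / r" by (simp only: qyx)
      then show ?thesis using rpos by (simp add: pos_le_divide_eq r_def)
    qed
  qed
qed

lemma sq_bound: assumes "lam > (0::real)" shows "w * v \<ge> - (lam/4) * v^2 - w^2 / lam"
proof -
  have "0 \<le> (lam * v / 2 + w)^2" by simp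
  also have "\<dots> = lam * (w * v + (lam/4) * v^2 + w^2 / lam)"
    using assms by (simp add: field_simps power2_eq_square)
  finally have "0 \<le> w * v + (lam/4) * v^2 + w^2 / lam"
    using assms by (simp add: zero_le_mult_iff)
  then show ?thesis by linarith
qed

lemma FF_lower: "FF x \<ge> (\<Sum>\<nu><N. \<Sum>j<d \<nu>. G (\<lambda>_ _. 0) \<nu> j * x \<nu> j) + (1/2) * (\<Sum>i<m. a i * phi 0)"
proof -
  have k0: "kk (\<lambda>_ _. 0) i = 0" for i by (simp add: kk_def matT_apply_def)
  have "(\<Sum>i<m. a i * (LB x i + deriv phi (kk (\<lambda>_ _. 0) i) * kk x i) + a i * phi 0)
      \<le> (\<Sum>i<m. a i * (LB x i + phi (kk x i)))"
  proof (rule sum_mono)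
    fix i assume "i \<in> {..<m}"
    then have ai: "a i \<ge> 0" using apos by auto
    have "deriv phi 0 * kk x i \<le> phi (kk x i) - phi 0"
      using phi_tangent[OF phic phid, of 0 "kk x i"] by simp
    then have "a i * (deriv phi 0 * kk x i) \<le> a i * (phi (kk x i) - phi 0)"
      using ai by (rule mult_left_mono)
    then show "a i * (LB x i + deriv phi (kk (\<lambda>_ _. 0) i) * kk x i) + a i * phi 0
      \<le> a i * (LB x i + phi (kk x i))" by (simp add: k0 algebra_simps)
  qed
  then have "(\<Sum>i<m. a i * (LB x i + deriv phi (kk (\<lambda>_ _. 0) i) * kk x i)) + (\<Sum>i<m. a i * phi 0)
      \<le> (\<Sum>i<m. a i * (LB x i + phi (kk x i)))" by (simp add: sum.distrib)
  then show ?thesis using DF_eq[of x "\<lambda>_ _. 0"] unfolding FF_def by linarith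
qed

lemma coercive:
  assumes lpos: "lam > 0" and lq: "\<forall>x\<in>profiles N d. Qs x \<ge> lam * nrm2 x"
  shows "\<exists>K. \<forall>x\<in>profiles N d. PP x \<ge> (lam/4) * nrm2 x - K"
proof -
  define w where "w \<nu> j = c \<nu> j + G (\<lambda>_ _. 0) \<nu> j" for \<nu> j
  define C0 where "C0 = (1/2) * (\<Sum>i<m. a i * phi 0)"
  define W where "W = (\<Sum>\<nu><N. \<Sum>j<d \<nu>. (w \<nu> j)^2 / lam)"
  show ?thesis
  proof (intro exI ballI)
    fix x assume xp: "x \<in> profiles N d"
    have e1: "PP x = (1/2) * Qs x + (\<Sum>\<nu><N. \<Sum>j<d \<nu>. c \<nu> j * x \<nu> j) + FF x"
      by (simp add: PP_def Qs_def qv_def sum.distrib sum_distrib_left)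
    have e2: "(\<Sum>\<nu><N. \<Sum>j<d \<nu>. c \<nu> j * x \<nu> j) + (\<Sum>\<nu><N. \<Sum>j<d \<nu>. G (\<lambda>_ _. 0) \<nu> j * x \<nu> j)
        = (\<Sum>\<nu><N. \<Sum>j<d \<nu>. w \<nu> j * x \<nu> j)"
      by (simp add: w_def sum.distrib[symmetric] distrib_right)
    have e3: "(\<Sum>\<nu><N. \<Sum>j<d \<nu>. w \<nu> j * x \<nu> j) \<ge> (\<Sum>\<nu><N. \<Sum>j<d \<nu>. - (lam/4) * (x \<nu> j)^2 - (w \<nu> j)^2 / lam)"
      by (intro sum_mono sq_bound lpos)
    have e4: "(\<Sum>\<nu><N. \<Sum>j<d \<nu>. - (lam/4) * (x \<nu> j)^2 - (w \<nu> j)^2 / lam) = - (lam/4) * nrm2 x - W"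
      by (simp add: nrm2_def W_def sum_subtractf sum_distrib_left)
    have "Qs x \<ge> lam * nrm2 x" using lq xp by blast
    then show "PP x \<ge> (lam/4) * nrm2 x - (W - C0)"
      using e1 e2 e3 e4 FF_lower[of x] unfolding C0_def by linarith
  qed
qed

lemma PP_split: "\<nu> < N \<Longrightarrow> PP x = theta N d m Q c a qy B L phi \<nu> x + (\<Sum>\<mu>\<in>{..<N}-{\<nu>}. qv \<mu> (x \<mu>))"
  by (simp add: PP_def theta_eq sum.remove[of "{..<N}" \<nu>])

lemma existence: "\<exists>x. is_nash_eq N d Xs (theta N d m Q c a qy B L phi) x"
proof -
  obtain lam where lpos: "lam > 0" and lq: "\<forall>x\<in>profiles N d. Qs x \<ge> lam * nrm2 x"
    using lam_exists by blast
  obtain K where co: "\<forall>x\<in>profiles N d. PP x \<ge> (lam/4) * nrm2 x - K"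
    using coercive[OF lpos lq] by blast
  define x0 where "x0 = (\<lambda>\<nu>. if \<nu> < N then (SOME v. v \<in> Xs \<nu>) else (\<lambda>_. 0))"
  have x0X: "x0 \<in> prodX N d Xs"
  proof -
    have "\<nu> < N \<Longrightarrow> (SOME v. v \<in> Xs \<nu>) \<in> Xs \<nu>" for \<nu>
      using XX by (metis ex_in_conv someI_ex)
    then show ?thesis using XX by (auto simp: prodX_def profiles_def x0_def)
  qed
  have x0p: "x0 \<in> profiles N d" using x0X by (simp add: prodX_def)
  define R where "R = sqrt (4 * \<bar>PP x0 + K\<bar> / lam)"
  have R0: "R \<ge> 0" using lpos by (simp add: R_def)
  have R2: "R^2 = 4 * \<bar>PP x0 + K\<bar> / lam" using lpos by (simp add: R_def)
  have big: "PP y > PP x0" if yp: "y \<in> profiles N d" and nu: "\<nu> < N" "j < d \<nu>" and yR: "\<bar>y \<nu> j\<bar> > R" for y \<nu> j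
  proof -
    have "R^2 < \<bar>y \<nu> j\<bar>^2" using yR R0 by (intro power_strict_mono) auto
    also have "\<dots> \<le> nrm2 y" using coord_le[OF nu, of y] by simp
    finally have "4 * \<bar>PP x0 + K\<bar> / lam < nrm2 y" using R2 by simp
    then have "4 * \<bar>PP x0 + K\<bar> < lam * nrm2 y" using lpos by (simp add: pos_divide_less_eq mult.commute)
    moreover have "4 * (PP x0 + K) \<le> 4 * \<bar>PP x0 + K\<bar>" by (rule mult_left_mono[OF abs_ge_self]) simp
    ultimately have "4 * (PP x0 + K) < lam * nrm2 y" by simp
    then have "PP x0 + K < (lam/4) * nrm2 y" by simp
    then show ?thesis using co yp by force
  qed
  define D where "D = prodX N d Xs \<inter> bx R"
  have cD: "compact D" unfolding D_def by (intro closed_Int_compact clo bx_compact)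
  have x0D: "x0 \<in> D" unfolding D_def
  proof (intro IntI x0X profiles_bx[OF x0p])
    fix \<nu> j assume "\<nu> < N" "j < d \<nu>"
    then show "\<bar>x0 \<nu> j\<bar> \<le> R" using big[OF x0p] by force
  qed
  then have "D \<noteq> {}" by blast
  from continuous_attains_inf[OF cD this continuous_on_subset[OF cont_PP]]
  obtain xs where xsD: "xs \<in> D" and mn: "\<forall>y\<in>D. PP xs \<le> PP y" by auto
  have glob: "PP xs \<le> PP y" if yX: "y \<in> prodX N d Xs" for y
  proof (cases "y \<in> bx R")
    case True then show ?thesis using mn yX by (simp add: D_def)
  next
    case False
    have yp: "y \<in> profiles N d" using yX by (simp add: prodX_def)
    then obtain \<nu> j where "\<nu> < N" "j < d \<nu>" "\<bar>y \<nu> j\<bar> > R"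
      using False profiles_bx[OF yp] by (meson not_le)
    then have "PP y > PP x0" using big[OF yp] by blast
    moreover have "PP xs \<le> PP x0" using mn x0D by blast
    ultimately show ?thesis by linarith
  qed
  have xsX: "xs \<in> prodX N d Xs" using xsD by (simp add: D_def)
  have "is_nash_eq N d Xs (theta N d m Q c a qy B L phi) xs"
    unfolding is_nash_eq_def
  proof (intro conjI xsX allI impI ballI)
    fix \<nu> w assume nu: "\<nu> < N" and w: "w \<in> Xs \<nu>"
    have wv: "w \<in> vecs (d \<nu>)" using XX nu w by blast
    have xw: "xs(\<nu> := w) \<in> prodX N d Xs"
      using xsX wv w nu unfolding prodX_def profiles_def by auto
    have rest: "(\<Sum>\<mu>\<in>{..<N}-{\<nu>}. qv \<mu> ((xs(\<nu> := w)) \<mu>)) = (\<Sum>\<mu>\<in>{..<N}-{\<nu>}. qv \<mu> (xs \<mu>))"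
      by (rule sum.cong) auto
    show "theta N d m Q c a qy B L phi \<nu> xs \<le> theta N d m Q c a qy B L phi \<nu> (xs(\<nu> := w))"
      using glob[OF xw] PP_split[OF nu, of xs] PP_split[OF nu, of "xs(\<nu> := w)"] rest by linarith
  qed
  then show ?thesis by blast
qed

end

theorem mainTheorem6:
  fixes N m :: nat and d :: "nat \<Rightarrow> nat"
    and Q :: "nat \<Rightarrow> nat \<Rightarrow> nat \<Rightarrow> real" and c :: "nat \<Rightarrow> nat \<Rightarrow> real"
    and Xs :: "nat \<Rightarrow> (nat \<Rightarrow> real) set"
    and a qy :: "nat \<Rightarrow> real" and B L :: "nat \<Rightarrow> nat \<Rightarrow> nat \<Rightarrow> real"
    and eps :: real and phi :: "real \<Rightarrow> real"
  assumes "N \<ge> 1" and "m \<ge> 1"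
    and "\<forall>\<nu><N. sym_pd (d \<nu>) (Q \<nu>)"
    and "\<forall>\<nu><N. c \<nu> \<in> vecs (d \<nu>)"
    and "\<forall>\<nu><N. Xs \<nu> \<noteq> {} \<and> Xs \<nu> \<subseteq> vecs (d \<nu>)"
    and "convex_profile_set (prodX N d Xs)" and "closed (prodX N d Xs)"
    and "\<forall>i<m. a i \<ge> 0"
    and "\<forall>i<m. qy i > 0"
    and "eps > 0"
    and "convex_on UNIV phi" and "phi C1_differentiable_on UNIV"
  shows "\<exists>!x. is_nash_eq N d Xs (theta N d m Q c a qy B L phi) x"
proof -
  interpret nepctx N m d Q c Xs a qy B L phi
    using assms by unfold_locales auto
  show ?thesis using existence uniq by blast
qed

end
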